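(* There is a constant $c>0$ such that for every positive integer $n$, \[\tfrac54 n-c\sqrt n\;\le\; st_{\mathcal{S}}(n)\;\le\; 2n-\sqrt n .\]
   Context: For a finite set $P$ of points in the plane, no two of which share an $x$-coordinate or a $y$-coordinate, $st_{\mathcal{S}}(P)$ is the minimum of $|W|$ over finite point sets $W$ such that no two distinct points of $P\cup W$ share an $x$-coordinate or a $y$-coordinate and every axis-parallel square whose boundary contains two distinct points of $P$ has a point of $W$ in its interior (equivalently, the $L_\infty$ witness Delaunay graph $\mathrm{SG}^-(P,W)$, in which distinct $p,q\in P$ are adjacent iff some axis-parallel square with $p,q$ on its boundary has no point of $W$ in its interior, has no edges). Define $st_{\mathcal{S}}(n)=\max\{st_{\mathcal{S}}(P): |P|=n\}$, the maximum over such sets $P$ of $n$ points. *)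

theory Defs
  imports Complex_Main
begin

type_synonym pt = "real \<times> real"

definition gen_pos :: "pt set \<Rightarrow> bool" where
  "gen_pos S \<longleftrightarrow> (\<forall>p\<in>S. \<forall>q\<in>S. p \<noteq> q \<longrightarrow> fst p \<noteq> fst q \<and> snd p \<noteq> snd q)"

definition sq_closed :: "real \<Rightarrow> real \<Rightarrow> real \<Rightarrow> pt set" where
  "sq_closed a b s = {(x, y). a \<le> x \<and> x \<le> a + s \<and> b \<le> y \<and> y \<le> b + s}"

definition sq_interior :: "real \<Rightarrow> real \<Rightarrow> real \<Rightarrow> pt set" where
  "sq_interior a b s = {(x, y). a < x \<and> x < a + s \<and> b < y \<and> y < b + s}"

definition sq_boundary :: "real \<Rightarrow> real \<Rightarrow> real \<Rightarrow> pt set" where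
  "sq_boundary a b s = sq_closed a b s - sq_interior a b s"

definition is_witness_set :: "pt set \<Rightarrow> pt set \<Rightarrow> bool" where
  "is_witness_set P W \<longleftrightarrow> finite W \<and> gen_pos (P \<union> W) \<and>
     (\<forall>p\<in>P. \<forall>q\<in>P. \<forall>a b s. p \<noteq> q \<and> s > 0 \<and> p \<in> sq_boundary a b s \<and> q \<in> sq_boundary a b s
        \<longrightarrow> (\<exists>w\<in>W. w \<in> sq_interior a b s))"

definition st_S :: "pt set \<Rightarrow> nat" where
  "st_S P = (LEAST k. \<exists>W. is_witness_set P W \<and> card W = k)"

definition st_S_n :: "nat \<Rightarrow> nat" where
  "st_S_n n = Max {st_S P | P. finite P \<and> card P = n \<and> gen_pos P}"

end

theory Submission
  imports Defs
begin


definition lt :: "pt \<Rightarrow> pt \<Rightarrow> bool" where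
  "lt p q \<longleftrightarrow> fst p < fst q \<and> snd p < snd q"

definition achn :: "pt set \<Rightarrow> bool" where
  "achn A \<longleftrightarrow> (\<forall>a\<in>A. \<forall>b\<in>A. \<not> lt a b)"

definition chn :: "pt set \<Rightarrow> bool" where
  "chn C \<longleftrightarrow> (\<forall>a\<in>C. \<forall>b\<in>C. a \<noteq> b \<longrightarrow> lt a b \<or> lt b a)"

lemma exists_max_fst:
  assumes "finite (S :: (real \<times> real) set)" "S \<noteq> {}"
  obtains m where "m \<in> S" "\<And>x. x \<in> S \<Longrightarrow> fst x \<le> fst m"
proof -
  have "Max (fst ` S) \<in> fst ` S" using assms by auto
  then obtain m where "m \<in> S" "fst m = Max (fst ` S)" by auto
  moreover have "\<And>x. x \<in> S \<Longrightarrow> fst x \<le> Max (fst ` S)" using assms by auto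
  ultimately show ?thesis using that by auto
qed

lemma chain_antichain:
  "finite P \<Longrightarrow> P \<noteq> {} \<Longrightarrow> \<exists>A C. A \<subseteq> P \<and> C \<subseteq> P \<and> achn A \<and> chn C \<and> card P \<le> card A * card C"
proof (induction P rule: finite_psubset_induct)
  case (psubset P)
  define M where "M = {p\<in>P. \<not> (\<exists>q\<in>P. lt p q)}"
  have finM: "finite M" using psubset(1) by (simp add: M_def)
  have antiM: "achn M" unfolding achn_def M_def by auto
  obtain p0 where p0: "p0 \<in> P" "\<And>x. x \<in> P \<Longrightarrow> fst x \<le> fst p0"
    using exists_max_fst[OF psubset(1) psubset(3)] by blast
  have "p0 \<in> M" using p0 unfolding M_def lt_def by force
  hence Mne: "M \<noteq> {}" by auto
  show ?case
  proof (cases "P - M = {}")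
    case True
    hence "P = M" using M_def by auto
    moreover have "chn {p0}" unfolding chn_def by auto
    ultimately show ?thesis using antiM p0 by (intro exI[of _ M] exI[of _ "{p0}"]) auto
  next
    case False
    have sub: "P - M \<subset> P" using Mne M_def by auto
    obtain A' C' where AC: "A' \<subseteq> P - M" "C' \<subseteq> P - M" "achn A'" "chn C'"
      "card (P - M) \<le> card A' * card C'"
      using psubset(2)[OF sub False] by blast
    have finP': "finite (P - M)" using psubset(1) by auto
    have "card (P - M) > 0" using False finP' by auto
    hence "card C' > 0" using AC(5) by (metis mult_is_0 not_gr_zero le_zero_eq)
    hence finC': "finite C'" "C' \<noteq> {}" by (auto intro: card_ge_0_finite)
    obtain c where c: "c \<in> C'" "\<And>x. x \<in> C' \<Longrightarrow> fst x \<le> fst c"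
      using exists_max_fst[OF finC'] by blast
    have "c \<notin> M" "c \<in> P" using c AC(2) by auto
    hence ne: "{q\<in>P. lt c q} \<noteq> {}" unfolding M_def by auto
    obtain m where m: "m \<in> {q\<in>P. lt c q}" "\<And>x. x \<in> {q\<in>P. lt c q} \<Longrightarrow> fst x \<le> fst m"
      using exists_max_fst[OF _ ne] psubset(1) by auto
    have mM: "m \<in> M"
    proof -
      have "\<not> lt m r" if "r \<in> P" for r
      proof
        assume "lt m r"
        hence "r \<in> {q\<in>P. lt c q}" using m that unfolding lt_def by auto
        hence "fst r \<le> fst m" using m by blast
        thus False using \<open>lt m r\<close> unfolding lt_def by auto
      qed
      thus ?thesis using m unfolding M_def by auto
    qed
    have below: "\<And>d. d \<in> C' \<Longrightarrow> lt d m"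
    proof -
      fix d assume d: "d \<in> C'"
      have "d = c \<or> lt d c"
      proof (cases "d = c")
        case False
        then have "lt d c \<or> lt c d" using AC(4) d c(1) unfolding chn_def by blast
        moreover have "\<not> lt c d" using c(2)[OF d] unfolding lt_def by auto
        ultimately show ?thesis by blast
      qed simp
      moreover have "lt c m" using m(1) by simp
      ultimately show "lt d m" unfolding lt_def by auto
    qed
    have chainC: "chn (insert m C')" using AC(4) below unfolding chn_def by blast
    have "m \<notin> C'" using mM AC(2) by auto
    hence cardC: "card (insert m C') = card C' + 1" using finC' by simp
    have cardP: "card P = card (P - M) + card M"
    proof -
      have MP: "M \<subseteq> P" unfolding M_def by auto
      have "card (P - M) = card P - card M" using card_Diff_subset[OF finM MP] .
      moreover have "card M \<le> card P" using card_mono[OF psubset(1) MP] .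
      ultimately show ?thesis by simp
    qed
    define A where "A = (if card M \<ge> card A' then M else A')"
    have "card P \<le> card A * card (insert m C')"
    proof -
      have "card A \<ge> card M" "card A \<ge> card A'" unfolding A_def by auto
      hence "card A' * card C' \<le> card A * card C'" by (simp add: mult_le_mono1)
      hence "card A' * card C' + card M \<le> card A * card C' + card A" using \<open>card A \<ge> card M\<close> by linarith
      hence "card A' * card C' + card M \<le> card A * (card C' + 1)" by simp
      thus ?thesis using cardP cardC AC(5) by simp
    qed
    moreover have "A \<subseteq> P \<and> achn A"
    proof (cases "card M \<ge> card A'")
      case True thus ?thesis using antiM unfolding A_def M_def by simp
    next
      case False thus ?thesis using AC(1,3) unfolding A_def by auto
    qed
    moreover have "insert m C' \<subseteq> P" using AC(2) m by auto
    ultimately show ?thesis using chainC by blast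
  qed
qed




definition dl :: "pt \<Rightarrow> pt \<Rightarrow> bool" where
  "dl p q \<longleftrightarrow> fst p < fst q \<and> snd q < snd p"

definition gap :: "pt set \<Rightarrow> real" where
  "gap P = Min (insert 1 ((\<lambda>(p,q). min \<bar>fst p - fst q\<bar> \<bar>snd p - snd q\<bar>) ` {(p,q). p\<in>P \<and> q\<in>P \<and> p\<noteq>q}))"

lemma gap_facts:
  assumes fin: "finite P" and gp: "gen_pos P"
  shows "gap P > 0" and "\<And>p q. p\<in>P \<Longrightarrow> q\<in>P \<Longrightarrow> p\<noteq>q \<Longrightarrow> gap P \<le> \<bar>fst p - fst q\<bar> \<and> gap P \<le> \<bar>snd p - snd q\<bar>"
proof -
  let ?S = "{(p,q). p\<in>P \<and> q\<in>P \<and> p\<noteq>q}"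
  let ?f = "(\<lambda>(p,q). min \<bar>fst p - fst q\<bar> \<bar>snd p - snd q\<bar>)"
  have "?S \<subseteq> P \<times> P" by auto
  hence finS: "finite ?S" using fin finite_subset by blast
  hence finI: "finite (insert 1 (?f ` ?S))" by simp
  have pos: "\<forall>x \<in> insert 1 (?f ` ?S). x > 0"
    using gp unfolding gen_pos_def by auto
  show "gap P > 0" unfolding gap_def using Min_in[OF finI] pos by blast
  fix p q assume "p\<in>P" "q\<in>P" "p\<noteq>q"
  hence "?f (p,q) \<in> insert 1 (?f ` ?S)" by blast
  hence "gap P \<le> ?f (p,q)" unfolding gap_def using Min_le[OF finI] by blast
  thus "gap P \<le> \<bar>fst p - fst q\<bar> \<and> gap P \<le> \<bar>snd p - snd q\<bar>" by simp
qed

definition ox :: "nat \<Rightarrow> real" where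
  "ox k = (if k = 1 then 1 else if k = 2 then 2 else if k = 3 then -3 else if k = 4 then -4 else 0)"
definition oy :: "nat \<Rightarrow> real" where
  "oy k = (if k = 1 then 1 else if k = 2 then -2 else if k = 3 then 3 else if k = 4 then -4 else 0)"

definition wl :: "real \<Rightarrow> pt \<Rightarrow> nat \<Rightarrow> pt" where
  "wl d p k = (fst p + d * ox k, snd p + d * oy k)"

lemma k_cases: "(k::nat) \<le> 4 \<Longrightarrow> k = 0 \<or> k = 1 \<or> k = 2 \<or> k = 3 \<or> k = 4" by auto

lemma ox_inj: "k \<le> 4 \<Longrightarrow> l \<le> 4 \<Longrightarrow> ox k = ox l \<Longrightarrow> k = l"
  using k_cases[of k] k_cases[of l] unfolding ox_def by auto
lemma oy_inj: "k \<le> 4 \<Longrightarrow> l \<le> 4 \<Longrightarrow> oy k = oy l \<Longrightarrow> k = l"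
  using k_cases[of k] k_cases[of l] unfolding oy_def by auto
lemma ox_bd: "\<bar>ox k\<bar> \<le> 4" unfolding ox_def by auto
lemma oy_bd: "\<bar>oy k\<bar> \<le> 4" unfolding oy_def by auto

lemma gp_image:
  assumes "\<And>t1 t2. t1\<in>T \<Longrightarrow> t2\<in>T \<Longrightarrow> fst (F t1) = fst (F t2) \<Longrightarrow> t1 = t2"
    and "\<And>t1 t2. t1\<in>T \<Longrightarrow> t2\<in>T \<Longrightarrow> snd (F t1) = snd (F t2) \<Longrightarrow> t1 = t2"
    and "S \<subseteq> F ` T"
  shows "gen_pos S"
  unfolding gen_pos_def
proof (intro ballI impI)
  fix u v assume "u \<in> S" "v \<in> S" "u \<noteq> v"
  then obtain t1 t2 where "t1 \<in> T" "t2 \<in> T" "u = F t1" "v = F t2" using assms(3) by blast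
  thus "fst u \<noteq> fst v \<and> snd u \<noteq> snd v" using assms(1,2) \<open>u \<noteq> v\<close> by metis
qed

lemma box_int:
  assumes "(x1,y1) \<in> sq_closed a b s" "(x2,y2) \<in> sq_closed a b s"
    "min x1 x2 < u" "u < max x1 x2" "min y1 y2 < v" "v < max y1 y2"
  shows "(u,v) \<in> sq_interior a b s"
  using assms unfolding sq_closed_def sq_interior_def by auto

lemma bd_closed: "p \<in> sq_boundary a b s \<Longrightarrow> p \<in> sq_closed a b s"
  unfolding sq_boundary_def by auto




lemma key_pair:
  fixes P A C W :: "pt set" and d :: real
  assumes fin: "finite P" and gp: "gen_pos P"
    and d: "d = gap P / 16"
    and anti: "achn A" and ch: "chn C"
    and X: "X = {p\<in>P. \<exists>a\<in>A. a = p \<or> lt a p}"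
    and Z: "Z = {p\<in>P. \<exists>c\<in>C. c = p \<or> dl c p}"
    and W: "W = (\<lambda>p. wl d p 1) ` (P - X) \<union> (\<lambda>p. wl d p 4) ` (X - A) \<union>
               (\<lambda>p. wl d p 2) ` (P - Z) \<union> (\<lambda>p. wl d p 3) ` (Z - C)"
    and pq: "p \<in> P" "q \<in> P" "fst p < fst q"
    and cl: "p \<in> sq_closed a b s" "q \<in> sq_closed a b s"
  shows "\<exists>w\<in>W. w \<in> sq_interior a b s"
proof -
  have pq_ne: "p \<noteq> q" using pq by auto
  have g0: "gap P > 0" using gap_facts(1)[OF fin gp] .
  have gx: "gap P \<le> fst q - fst p" using gap_facts(2)[OF fin gp pq(1,2) pq_ne] pq(3) by auto
  have gy: "gap P \<le> \<bar>snd p - snd q\<bar>" using gap_facts(2)[OF fin gp pq(1,2) pq_ne] by auto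
  have yne: "snd p \<noteq> snd q" using gp pq_ne pq(1,2) unfolding gen_pos_def by auto
  obtain px py where pdef: "p = (px,py)" by (cases p)
  obtain qx qy where qdef: "q = (qx,qy)" by (cases q)
  have clp: "(px,py) \<in> sq_closed a b s" and clq: "(qx,qy) \<in> sq_closed a b s"
    using cl pdef qdef by auto
  show ?thesis
  proof (cases "snd p < snd q")
    case True
    hence ltpq: "lt p q" using pq(3) unfolding lt_def by auto
    have gy': "gap P \<le> qy - py" using gy True pdef qdef by auto
    show ?thesis
    proof (cases "p \<in> X")
      case False
      hence "wl d p 1 \<in> W" using W pq(1) by blast
      moreover have "wl d p 1 \<in> sq_interior a b s"
        unfolding wl_def ox_def oy_def pdef
        by (rule box_int[OF clp clq]) (use g0 gx gy' d pdef qdef True pq(3) in auto)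
      ultimately show ?thesis by blast
    next
      case True
      then obtain a0 where a0: "a0 \<in> A" "a0 = p \<or> lt a0 p" using X by blast
      hence "lt a0 q" using ltpq unfolding lt_def by auto
      hence "q \<in> X" using X a0 pq(2) by blast
      moreover have "q \<notin> A" using anti a0 \<open>lt a0 q\<close> unfolding achn_def by blast
      ultimately have "wl d q 4 \<in> W" using W by blast
      moreover have "wl d q 4 \<in> sq_interior a b s"
        unfolding wl_def ox_def oy_def qdef
        by (rule box_int[OF clp clq]) (use g0 gx gy' d pdef qdef \<open>snd p < snd q\<close> pq(3) in auto)
      ultimately show ?thesis by blast
    qed
  next
    case False
    hence T: "snd q < snd p" using yne by auto
    hence dlpq: "dl p q" using pq(3) unfolding dl_def by auto
    have gy': "gap P \<le> py - qy" using gy T pdef qdef by auto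
    show ?thesis
    proof (cases "p \<in> Z")
      case False
      hence "wl d p 2 \<in> W" using W pq(1) by blast
      moreover have "wl d p 2 \<in> sq_interior a b s"
        unfolding wl_def ox_def oy_def pdef
        by (rule box_int[OF clp clq]) (use g0 gx gy' d pdef qdef T pq(3) in auto)
      ultimately show ?thesis by blast
    next
      case True
      then obtain c0 where c0: "c0 \<in> C" "c0 = p \<or> dl c0 p" using Z by blast
      hence "dl c0 q" using dlpq unfolding dl_def by auto
      hence "q \<in> Z" using Z c0 pq(2) by blast
      moreover have "q \<notin> C"
      proof
        assume "q \<in> C"
        have "c0 \<noteq> q" using \<open>dl c0 q\<close> unfolding dl_def by auto
        hence "lt c0 q \<or> lt q c0" using ch c0(1) \<open>q \<in> C\<close> unfolding chn_def by blast
        thus False using \<open>dl c0 q\<close> unfolding dl_def lt_def by auto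
      qed
      ultimately have "wl d q 3 \<in> W" using W by blast
      moreover have "wl d q 3 \<in> sq_interior a b s"
        unfolding wl_def ox_def oy_def qdef
        by (rule box_int[OF clp clq]) (use g0 gx gy' d pdef qdef T pq(3) in auto)
      ultimately show ?thesis by blast
    qed
  qed
qed




lemma ub_witness:
  assumes fin: "finite P" and gp: "gen_pos P"
  shows "\<exists>W. is_witness_set P W \<and> real (card W) \<le> 2 * real (card P) - sqrt (real (card P))"
proof (cases "P = {}")
  case True
  have "is_witness_set P {}" using True unfolding is_witness_set_def gen_pos_def by auto
  thus ?thesis using True by (intro exI[of _ "{}"]) auto
next
  case False
  obtain A C where AC: "A \<subseteq> P" "C \<subseteq> P" "achn A" "chn C" "card P \<le> card A * card C"
    using chain_antichain[OF fin False] by blast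
  define d where "d = gap P / 16"
  define X where "X = {p\<in>P. \<exists>a\<in>A. a = p \<or> lt a p}"
  define Z where "Z = {p\<in>P. \<exists>c\<in>C. c = p \<or> dl c p}"
  define W where "W = (\<lambda>p. wl d p 1) ` (P - X) \<union> (\<lambda>p. wl d p 4) ` (X - A) \<union>
               (\<lambda>p. wl d p 2) ` (P - Z) \<union> (\<lambda>p. wl d p 3) ` (Z - C)"
  have AX: "A \<subseteq> X" "X \<subseteq> P" using AC(1) unfolding X_def by auto
  have CZ: "C \<subseteq> Z" "Z \<subseteq> P" using AC(2) unfolding Z_def by auto
  have finX: "finite X" "finite A" "finite Z" "finite C"
    using finite_subset[OF AX(2) fin] finite_subset[OF AC(1) fin] finite_subset[OF CZ(2) fin] finite_subset[OF AC(2) fin] by auto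
  have finW: "finite W" unfolding W_def using fin finX by auto
  have cardW: "card W \<le> card (P - X) + card (X - A) + card (P - Z) + card (Z - C)"
  proof -
    have "card W \<le> card ((\<lambda>p. wl d p 1) ` (P - X) \<union> (\<lambda>p. wl d p 4) ` (X - A) \<union>
               (\<lambda>p. wl d p 2) ` (P - Z)) + card ((\<lambda>p. wl d p 3) ` (Z - C))"
      unfolding W_def by (rule card_Un_le)
    also have "\<dots> \<le> card ((\<lambda>p. wl d p 1) ` (P - X) \<union> (\<lambda>p. wl d p 4) ` (X - A))
       + card ((\<lambda>p. wl d p 2) ` (P - Z)) + card ((\<lambda>p. wl d p 3) ` (Z - C))"
      using card_Un_le[of "(\<lambda>p. wl d p 1) ` (P - X) \<union> (\<lambda>p. wl d p 4) ` (X - A)" "(\<lambda>p. wl d p 2) ` (P - Z)"] by linarith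
    also have "\<dots> \<le> card ((\<lambda>p. wl d p 1) ` (P - X)) + card ((\<lambda>p. wl d p 4) ` (X - A))
       + card ((\<lambda>p. wl d p 2) ` (P - Z)) + card ((\<lambda>p. wl d p 3) ` (Z - C))"
      using card_Un_le[of "(\<lambda>p. wl d p 1) ` (P - X)" "(\<lambda>p. wl d p 4) ` (X - A)"] by linarith
    also have "\<dots> \<le> card (P - X) + card (X - A) + card (P - Z) + card (Z - C)"
      using card_image_le[of "P - X" "\<lambda>p. wl d p 1"] card_image_le[of "X - A" "\<lambda>p. wl d p 4"]
        card_image_le[of "P - Z" "\<lambda>p. wl d p 2"] card_image_le[of "Z - C" "\<lambda>p. wl d p 3"] finX fin by simp
    finally show ?thesis .
  qed
  have c1: "card (P - X) + card (X - A) = card P - card A"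
    using card_Diff_subset[OF finX(1) AX(2)] card_Diff_subset[OF finX(2) AX(1)]
      card_mono[OF fin AX(2)] card_mono[OF finX(1) AX(1)] by simp
  have c2: "card (P - Z) + card (Z - C) = card P - card C"
    using card_Diff_subset[OF finX(3) CZ(2)] card_Diff_subset[OF finX(4) CZ(1)]
      card_mono[OF fin CZ(2)] card_mono[OF finX(3) CZ(1)] by simp
  have cA: "card A \<le> card P" "card C \<le> card P"
    using card_mono[OF fin AC(1)] card_mono[OF fin AC(2)] .
  have cardW2: "real (card W) \<le> 2 * real (card P) - real (card A) - real (card C)"
  proof -
    have "card W \<le> (card P - card A) + (card P - card C)" using cardW c1 c2 by simp
    hence "real (card W) \<le> real ((card P - card A) + (card P - card C))" by linarith
    thus ?thesis using cA by (simp add: of_nat_diff)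
  qed
  have sq: "sqrt (real (card P)) \<le> real (card A) + real (card C)"
  proof -
    have "real (card P) \<le> real (card A) * real (card C)" using AC(5)
      by (simp only: of_nat_mult[symmetric] of_nat_le_iff)
    also have "\<dots> \<le> (real (card A) + real (card C))^2"
      by (simp add: power2_eq_square algebra_simps)
    finally have "sqrt (real (card P)) \<le> sqrt ((real (card A) + real (card C))^2)"
      using real_sqrt_le_mono by blast
    thus ?thesis by simp
  qed
  have g0: "gap P > 0" using gap_facts(1)[OF fin gp] .
  have d0: "d > 0" using g0 d_def by simp
  have gpW: "gen_pos (P \<union> W)"
  proof (rule gp_image[where T = "P \<times> {..4::nat}" and F = "\<lambda>(p,k). wl d p k"])
    show "P \<union> W \<subseteq> (\<lambda>(p,k). wl d p k) ` (P \<times> {..4})"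
    proof
      fix u assume "u \<in> P \<union> W"
      thus "u \<in> (\<lambda>(p,k). wl d p k) ` (P \<times> {..4})"
      proof
        assume "u \<in> P"
        moreover have "wl d u 0 = u" unfolding wl_def ox_def oy_def by simp
        ultimately show ?thesis by (intro image_eqI[of _ _ "(u,0)"]) auto
      next
        assume "u \<in> W"
        thus ?thesis unfolding W_def using AX CZ by auto
      qed
    qed
  next
    fix t1 t2 assume t: "t1 \<in> P \<times> {..4}" "t2 \<in> P \<times> {..4}"
      and eq: "fst ((\<lambda>(p,k). wl d p k) t1) = fst ((\<lambda>(p,k). wl d p k) t2)"
    obtain p k q l where tt: "t1 = (p,k)" "t2 = (q,l)" by (cases t1, cases t2)
    have pk: "p \<in> P" "q \<in> P" "k \<le> 4" "l \<le> 4" using t tt by auto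
    have e: "fst p + d * ox k = fst q + d * ox l" using eq tt unfolding wl_def by simp
    have "p = q"
    proof (rule ccontr)
      assume "p \<noteq> q"
      hence "gap P \<le> \<bar>fst p - fst q\<bar>" using gap_facts(2)[OF fin gp pk(1,2)] by auto
      moreover have "\<bar>d * ox k\<bar> \<le> 4 * d" "\<bar>d * ox l\<bar> \<le> 4 * d"
        using ox_bd[of k] ox_bd[of l] d0 by (auto simp: abs_mult)
      moreover have "fst p - fst q = d * ox l - d * ox k" using e by linarith
      moreover have "\<bar>d * ox l - d * ox k\<bar> \<le> \<bar>d * ox l\<bar> + \<bar>d * ox k\<bar>" by (rule abs_triangle_ineq4)
      ultimately show False using d_def g0 by linarith
    qed
    moreover have "ox k = ox l" using e \<open>p = q\<close> d0 by simp
    ultimately show "t1 = t2" using ox_inj[OF pk(3,4)] tt by simp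
  next
    fix t1 t2 assume t: "t1 \<in> P \<times> {..4}" "t2 \<in> P \<times> {..4}"
      and eq: "snd ((\<lambda>(p,k). wl d p k) t1) = snd ((\<lambda>(p,k). wl d p k) t2)"
    obtain p k q l where tt: "t1 = (p,k)" "t2 = (q,l)" by (cases t1, cases t2)
    have pk: "p \<in> P" "q \<in> P" "k \<le> 4" "l \<le> 4" using t tt by auto
    have e: "snd p + d * oy k = snd q + d * oy l" using eq tt unfolding wl_def by simp
    have "p = q"
    proof (rule ccontr)
      assume "p \<noteq> q"
      hence "gap P \<le> \<bar>snd p - snd q\<bar>" using gap_facts(2)[OF fin gp pk(1,2)] by auto
      moreover have "\<bar>d * oy k\<bar> \<le> 4 * d" "\<bar>d * oy l\<bar> \<le> 4 * d"
        using oy_bd[of k] oy_bd[of l] d0 by (auto simp: abs_mult)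
      moreover have "snd p - snd q = d * oy l - d * oy k" using e by linarith
      moreover have "\<bar>d * oy l - d * oy k\<bar> \<le> \<bar>d * oy l\<bar> + \<bar>d * oy k\<bar>" by (rule abs_triangle_ineq4)
      ultimately show False using d_def g0 by linarith
    qed
    moreover have "oy k = oy l" using e \<open>p = q\<close> d0 by simp
    ultimately show "t1 = t2" using oy_inj[OF pk(3,4)] tt by simp
  qed
  have wit: "is_witness_set P W"
    unfolding is_witness_set_def
  proof (intro conjI finW gpW ballI allI impI)
    fix p q a b s
    assume p: "p \<in> P" and q: "q \<in> P" and h: "p \<noteq> q \<and> 0 < s \<and> p \<in> sq_boundary a b s \<and> q \<in> sq_boundary a b s"
    have cl: "p \<in> sq_closed a b s" "q \<in> sq_closed a b s" using h bd_closed by auto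
    have "fst p \<noteq> fst q" using gp p q h unfolding gen_pos_def by auto
    hence "fst p < fst q \<or> fst q < fst p" by auto
    thus "\<exists>w\<in>W. w \<in> sq_interior a b s"
    proof
      assume "fst p < fst q"
      show ?thesis by (rule key_pair[OF fin gp d_def AC(3,4) X_def Z_def W_def p q \<open>fst p < fst q\<close> cl])
    next
      assume "fst q < fst p"
      show ?thesis by (rule key_pair[OF fin gp d_def AC(3,4) X_def Z_def W_def q p \<open>fst q < fst p\<close> cl(2,1)])
    qed
  qed
  show ?thesis using wit cardW2 sq by (intro exI[of _ W]) auto
qed




definition pp :: "nat \<Rightarrow> pt" where "pp i = (real i, - real i)"
definition qq :: "nat \<Rightarrow> pt" where "qq i = (real i + 3/2, - real i + 3/2)"
definition Pn :: "nat \<Rightarrow> pt set" where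
  "Pn n = pp ` {..< (n+1) div 2} \<union> qq ` {..< n div 2}"

definition sa :: "nat \<Rightarrow> nat \<Rightarrow> real" where
  "sa t i = (if t = 0 then real i else if t = 1 then real i + 3/2 else 2 * real i)"
definition sb :: "nat \<Rightarrow> nat \<Rightarrow> real" where
  "sb t i = (if t = 0 then - real i - 1 else if t = 1 then - real i + 1/2 else - 2 * real i)"
definition ss :: "nat \<Rightarrow> nat \<Rightarrow> real" where
  "ss t i = (if t = 2 then 3/2 else 1)"

definition In :: "nat \<Rightarrow> (nat \<times> nat) set" where
  "In n = ({0} \<times> {..< (n+1) div 2 - 1}) \<union> ({1} \<times> {..< n div 2 - 1}) \<union> ({2} \<times> {..< (n div 2 + 1) div 2})"

lemma half_ne: "real (i::nat) \<noteq> real j + 3/2"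
proof
  assume "real i = real j + 3/2"
  hence "real (2*i) = real (2*j+3)" by simp
  hence "2*i = 2*j+3" by (simp only: of_nat_eq_iff)
  thus False by presburger
qed

lemma pp_qq_ne: "pp i \<noteq> qq j"
  unfolding pp_def qq_def by auto

lemma Pn_facts: "finite (Pn n)" "card (Pn n) = n" "gen_pos (Pn n)"
proof -
  show "finite (Pn n)" unfolding Pn_def by simp
  have ip: "inj pp" unfolding inj_def pp_def by auto
  have iq: "inj qq" unfolding inj_def qq_def by auto
  have disj: "pp ` {..< (n+1) div 2} \<inter> qq ` {..< n div 2} = {}" using pp_qq_ne by blast
  have "card (Pn n) = card (pp ` {..< (n+1) div 2}) + card (qq ` {..< n div 2})"
    unfolding Pn_def by (rule card_Un_disjoint) (use disj in auto)
  also have "\<dots> = (n+1) div 2 + n div 2"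
    using card_image[OF inj_on_subset[OF ip]] card_image[OF inj_on_subset[OF iq]] by simp
  also have "\<dots> = n" by presburger
  finally show "card (Pn n) = n" .
  show "gen_pos (Pn n)"
    unfolding gen_pos_def Pn_def
  proof (intro ballI impI)
    fix u v assume u: "u \<in> pp ` {..< (n+1) div 2} \<union> qq ` {..< n div 2}"
      and v: "v \<in> pp ` {..< (n+1) div 2} \<union> qq ` {..< n div 2}" and uv: "u \<noteq> v"
    have hn1: "\<And>i j. real (i::nat) \<noteq> real j + 3/2" by (rule half_ne)
    have hn2: "\<And>i j. - real (i::nat) \<noteq> - real j + 3/2" using half_ne by (metis add.commute add_uminus_conv_diff minus_add_cancel neg_equal_iff_equal uminus_add_conv_diff)
    show "fst u \<noteq> fst v \<and> snd u \<noteq> snd v"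
      using u v uv hn1 hn2 unfolding pp_def qq_def by (auto, metis, metis)
  qed
qed




lemma on_bd: "a \<le> x \<Longrightarrow> x \<le> a + s \<Longrightarrow> b \<le> y \<Longrightarrow> y \<le> b + s \<Longrightarrow> (x = a \<or> x = a + s \<or> y = b \<or> y = b + s)
  \<Longrightarrow> (x,y) \<in> sq_boundary a b s"
  unfolding sq_boundary_def sq_closed_def sq_interior_def by auto

lemma In_pts:
  assumes "(t,i) \<in> In n"
  shows "\<exists>p\<in>Pn n. \<exists>q\<in>Pn n. p \<noteq> q \<and> p \<in> sq_boundary (sa t i) (sb t i) (ss t i)
          \<and> q \<in> sq_boundary (sa t i) (sb t i) (ss t i)"
proof -
  have "t = 0 \<and> i + 1 < (n+1) div 2 \<or> t = 1 \<and> i + 1 < n div 2 \<or> t = 2 \<and> 2*i < n div 2"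
    using assms unfolding In_def by auto
  moreover have "n div 2 \<le> (n+1) div 2" by simp
  ultimately consider (a) "t = 0" "i + 1 < (n+1) div 2" | (b) "t = 1" "i + 1 < n div 2"
    | (c) "t = 2" "2*i < n div 2" "2*i < (n+1) div 2" by linarith
  thus ?thesis
  proof cases
    case a
    have "pp i \<in> Pn n" "pp (i+1) \<in> Pn n" using a unfolding Pn_def by auto
    moreover have "pp i \<noteq> pp (i+1)" unfolding pp_def by simp
    moreover have "pp i \<in> sq_boundary (sa t i) (sb t i) (ss t i)"
      unfolding pp_def sa_def sb_def ss_def using a by (intro on_bd) auto
    moreover have "pp (i+1) \<in> sq_boundary (sa t i) (sb t i) (ss t i)"
      unfolding pp_def sa_def sb_def ss_def using a by (intro on_bd) auto
    ultimately show ?thesis by blast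
  next
    case b
    have "qq i \<in> Pn n" "qq (i+1) \<in> Pn n" using b unfolding Pn_def by auto
    moreover have "qq i \<noteq> qq (i+1)" unfolding qq_def by simp
    moreover have "qq i \<in> sq_boundary (sa t i) (sb t i) (ss t i)"
      unfolding qq_def sa_def sb_def ss_def using b by (intro on_bd) auto
    moreover have "qq (i+1) \<in> sq_boundary (sa t i) (sb t i) (ss t i)"
      unfolding qq_def sa_def sb_def ss_def using b by (intro on_bd) auto
    ultimately show ?thesis by blast
  next
    case c
    have "pp (2*i) \<in> Pn n" "qq (2*i) \<in> Pn n" using c unfolding Pn_def by auto
    moreover have "pp (2*i) \<noteq> qq (2*i)" by (rule pp_qq_ne)
    moreover have "pp (2*i) \<in> sq_boundary (sa t i) (sb t i) (ss t i)"
      unfolding pp_def sa_def sb_def ss_def using c by (intro on_bd) auto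
    moreover have "qq (2*i) \<in> sq_boundary (sa t i) (sb t i) (ss t i)"
      unfolding qq_def sa_def sb_def ss_def using c by (intro on_bd) auto
    ultimately show ?thesis by blast
  qed
qed

lemma sep_disj:
  assumes "a + s \<le> a' \<or> a' + s' \<le> a \<or> b + s \<le> b' \<or> b' + s' \<le> b"
  shows "sq_interior a b s \<inter> sq_interior a' b' s' = {}"
  using assms unfolding sq_interior_def by auto

lemma nat_lt_real: "(i::nat) < j \<Longrightarrow> real i + 1 \<le> real j"
  by (metis Suc_eq_plus1 Suc_leI of_nat_1 of_nat_add of_nat_le_iff)

definition sepq :: "nat \<Rightarrow> nat \<Rightarrow> nat \<Rightarrow> nat \<Rightarrow> bool" where
  "sepq t i t' j \<longleftrightarrow> (sa t i + ss t i \<le> sa t' j \<or> sa t' j + ss t' j \<le> sa t i \<or>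
         sb t i + ss t i \<le> sb t' j \<or> sb t' j + ss t' j \<le> sb t i)"

lemma sepq_sym: "sepq t i t' j \<Longrightarrow> sepq t' j t i" unfolding sepq_def by auto

lemma s00: "i \<noteq> j \<Longrightarrow> sepq 0 i 0 j"
proof -
  assume "i \<noteq> j"
  hence "i < j \<or> j < i" by auto
  thus ?thesis using nat_lt_real[of i j] nat_lt_real[of j i] unfolding sepq_def sa_def sb_def ss_def by auto
qed
lemma s11: "i \<noteq> j \<Longrightarrow> sepq 1 i 1 j"
proof -
  assume "i \<noteq> j"
  hence "i < j \<or> j < i" by auto
  thus ?thesis using nat_lt_real[of i j] nat_lt_real[of j i] unfolding sepq_def sa_def sb_def ss_def by auto
qed
lemma s22: "i \<noteq> j \<Longrightarrow> sepq 2 i 2 j"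
proof -
  assume "i \<noteq> j"
  hence "i < j \<or> j < i" by auto
  thus ?thesis using nat_lt_real[of i j] nat_lt_real[of j i] unfolding sepq_def sa_def sb_def ss_def by auto
qed
lemma s01: "sepq 0 i 1 j"
proof -
  have "j < i \<or> i \<le> j" by auto
  thus ?thesis using nat_lt_real[of j i] unfolding sepq_def sa_def sb_def ss_def by auto
qed
lemma s02: "sepq 0 i 2 j"
proof -
  have A: "2*j \<le> i \<Longrightarrow> 2 * real j \<le> real i" by (metis of_nat_le_iff of_nat_mult of_nat_numeral)
  have "i < 2*j \<or> 2*j \<le> i" by auto
  thus ?thesis using nat_lt_real[of i "2*j"] A unfolding sepq_def sa_def sb_def ss_def by auto
qed
lemma s12: "sepq 1 i 2 j"
proof -
  have A: "2*j \<le> i \<Longrightarrow> 2 * real j \<le> real i" by (metis of_nat_le_iff of_nat_mult of_nat_numeral)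
  have "i < 2*j \<or> 2*j \<le> i" by auto
  thus ?thesis using nat_lt_real[of i "2*j"] A unfolding sepq_def sa_def sb_def ss_def by auto
qed

lemma sep_SQ:
  assumes "t \<le> 2" "t' \<le> 2" "(t,i) \<noteq> (t',j)"
  shows "sepq t i t' j"
proof -
  have tt: "t = 0 \<or> t = 1 \<or> t = 2" "t' = 0 \<or> t' = 1 \<or> t' = 2" using assms(1,2) by auto
  thus ?thesis using assms(3) s00 s11 s22 s01 s02 s12 sepq_sym by metis
qed




lemma lb_card:
  assumes W: "is_witness_set (Pn n) W"
  shows "card (In n) \<le> card W"
proof -
  have finW: "finite W" using W unfolding is_witness_set_def by auto
  have ex: "\<exists>w. w \<in> W \<and> w \<in> sq_interior (sa t i) (sb t i) (ss t i)" if ti: "(t,i) \<in> In n" for t i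
  proof -
    obtain p q where pq: "p \<in> Pn n" "q \<in> Pn n" "p \<noteq> q" "p \<in> sq_boundary (sa t i) (sb t i) (ss t i)"
      "q \<in> sq_boundary (sa t i) (sb t i) (ss t i)" using In_pts[OF ti] by blast
    have "ss t i > 0" unfolding ss_def by auto
    thus ?thesis using W pq unfolding is_witness_set_def by blast
  qed
  define f where "f = (\<lambda>(t,i). SOME w. w \<in> W \<and> w \<in> sq_interior (sa t i) (sb t i) (ss t i))"
  have fP: "f (t,i) \<in> W \<and> f (t,i) \<in> sq_interior (sa t i) (sb t i) (ss t i)" if "(t,i) \<in> In n" for t i
    unfolding f_def using someI_ex[OF ex[OF that]] by simp
  have t2: "t \<le> 2" if "(t,i) \<in> In n" for t i using that unfolding In_def by auto
  have inj: "inj_on f (In n)"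
  proof (rule inj_onI)
    fix x y assume x: "x \<in> In n" and y: "y \<in> In n" and e: "f x = f y"
    obtain t i t' j where xy: "x = (t,i)" "y = (t',j)" by (cases x, cases y)
    show "x = y"
    proof (rule ccontr)
      assume "x \<noteq> y"
      hence "sepq t i t' j" using sep_SQ t2 x y xy by auto
      hence "sq_interior (sa t i) (sb t i) (ss t i) \<inter> sq_interior (sa t' j) (sb t' j) (ss t' j) = {}"
        unfolding sepq_def by (rule sep_disj)
      moreover have "f x \<in> sq_interior (sa t i) (sb t i) (ss t i)" using fP x xy by auto
      moreover have "f y \<in> sq_interior (sa t' j) (sb t' j) (ss t' j)" using fP y xy by auto
      ultimately show False using e by auto
    qed
  qed
  have "f ` In n \<subseteq> W" using fP by auto
  thus ?thesis using card_inj_on_le[OF inj _ finW] by blast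
qed

lemma card_In: "real (card (In n)) \<ge> 5/4 * real n - 9/4"
proof -
  define a where "a = (n+1) div 2"
  define b where "b = n div 2"
  have c: "card (In n) = (a - 1) + (b - 1) + (b + 1) div 2"
  proof -
    have "card (In n) = card ({0::nat} \<times> {..< a - 1}) + card ({1::nat} \<times> {..< b - 1}) + card ({2::nat} \<times> {..< (b + 1) div 2})"
      unfolding In_def a_def b_def
      by (subst card_Un_disjoint, auto)+
    thus ?thesis by (simp add: card_cartesian_product)
  qed
  have n1: "a + b = n" "2*b + 1 \<ge> n" "2 * ((b+1) div 2) \<ge> b" unfolding a_def b_def by presburger+
  have "real (a - 1) \<ge> real a - 1" "real (b - 1) \<ge> real b - 1" by linarith+
  moreover have "real (a + b) = real n" "real (2*b+1) \<ge> real n" "real (2 * ((b+1) div 2)) \<ge> real b"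
    using n1 by (simp_all only: of_nat_le_iff)
  ultimately show ?thesis unfolding c by simp
qed




lemma st_S_le:
  assumes "finite P" "gen_pos P"
  shows "real (st_S P) \<le> 2 * real (card P) - sqrt (real (card P))"
proof -
  obtain W where W: "is_witness_set P W" "real (card W) \<le> 2 * real (card P) - sqrt (real (card P))"
    using ub_witness[OF assms] by blast
  have "st_S P \<le> card W" unfolding st_S_def by (rule Least_le) (use W in blast)
  thus ?thesis using W(2) by linarith
qed

lemma st_S_ge: "card (In n) \<le> st_S (Pn n)"
proof -
  have "\<exists>k. \<exists>W. is_witness_set (Pn n) W \<and> card W = k"
    using ub_witness[OF Pn_facts(1,3)] by blast
  hence "\<exists>W. is_witness_set (Pn n) W \<and> card W = st_S (Pn n)"
    unfolding st_S_def by (rule LeastI_ex)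
  then obtain W where "is_witness_set (Pn n) W" "card W = st_S (Pn n)" by blast
  thus ?thesis using lb_card by metis
qed

theorem mainTheorem17:
  shows "\<exists>c::real. c > 0 \<and> (\<forall>n::nat. n \<ge> 1 \<longrightarrow>
           (5/4) * real n - c * sqrt (real n) \<le> real (st_S_n n) \<and>
           real (st_S_n n) \<le> 2 * real n - sqrt (real n))"
proof (intro exI[of _ 3] conjI allI impI)
  show "(0::real) < 3" by simp
  fix n :: nat assume n1: "n \<ge> 1"
  define S where "S = {st_S P | P. finite P \<and> card P = n \<and> gen_pos P}"
  have bd: "x \<le> 2 * n" if xS: "x \<in> S" for x
  proof -
    obtain P where P: "x = st_S P" "finite P" "card P = n" "gen_pos P" using xS S_def by blast
    have "real x \<le> 2 * real n - sqrt (real n)" using st_S_le[OF P(2,4)] P by simp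
    hence "real x \<le> 2 * real n" by (smt (verit) real_sqrt_ge_zero of_nat_0_le_iff)
    thus ?thesis by linarith
  qed
  have finS: "finite S" using bd by (intro finite_subset[of S "{..2*n}"]) auto
  have PnS: "st_S (Pn n) \<in> S" unfolding S_def using Pn_facts by blast
  have eq: "st_S_n n = Max S" unfolding st_S_n_def S_def by simp
  have "st_S_n n \<in> S" unfolding eq using finS PnS by (intro Max_in) auto
  then obtain P where P: "st_S_n n = st_S P" "finite P" "card P = n" "gen_pos P" unfolding S_def by blast
  show "real (st_S_n n) \<le> 2 * real n - sqrt (real n)" using st_S_le[OF P(2,4)] P by simp
  have "st_S (Pn n) \<le> st_S_n n" unfolding eq using finS PnS by (rule Max_ge)
  hence "card (In n) \<le> st_S_n n" using st_S_ge[of n] by linarith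
  hence "real (st_S_n n) \<ge> 5/4 * real n - 9/4" using card_In[of n] by linarith
  moreover have "sqrt (real n) \<ge> 1" using n1 by simp
  ultimately show "(5/4) * real n - 3 * sqrt (real n) \<le> real (st_S_n n)" by linarith
qed


end
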